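(* Let $\theta=(\gamma,\mu,\sigma)\in\mathbb{R}\times\mathbb{R}\times(0,\infty)$ and $x\in\mathbb{R}$ with $1+\gamma z>0$, where $z=(x-\mu)/\sigma$, and let $u=u_\gamma(z)$. Then \[|\partial_\sigma\ell_\theta(x)|\le\begin{cases}\dfrac{z+1}{\sigma(1+\gamma z)}&\text{if }z\ge0,\\[1ex] \sigma^{-1}\big(1+u\log u\big)\,u^{\max(\gamma,0)}&\text{if }z\le0.\end{cases}\]
   Context: $u_\gamma(z)=(1+\gamma z)^{-1/\gamma}$ for $\gamma\ne0$ and $e^{-z}$ for $\gamma=0$. $\ell_\theta(x)=\log p_\theta(x)=-\log\sigma-u+(\gamma+1)\log u$ is the GEV log-density on $\{1+\gamma z>0\}$ (GEV density $p_\theta(x)=\sigma^{-1}e^{-u}u^{\gamma+1}\mathbf 1(1+\gamma z>0)$); its partial derivative in $\sigma$ is $\partial_\sigma\ell_\theta(x)=\frac{(1-u)z-1}{\sigma(1+\gamma z)}$. *)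

theory Defs
  imports "HOL-Analysis.Analysis"
begin

definition u_gev :: "real \<Rightarrow> real \<Rightarrow> real" where
  "u_gev \<gamma> z = (if \<gamma> = 0 then exp (- z) else (1 + \<gamma> * z) powr (- 1 / \<gamma>))"

definition z_gev :: "real \<Rightarrow> real \<Rightarrow> real \<Rightarrow> real" where
  "z_gev \<mu> \<sigma> x = (x - \<mu>) / \<sigma>"

definition loglik_gev :: "real \<Rightarrow> real \<Rightarrow> real \<Rightarrow> real \<Rightarrow> real" where
  "loglik_gev \<gamma> \<mu> \<sigma> x =
     (let z = z_gev \<mu> \<sigma> x; u = u_gev \<gamma> z in - ln \<sigma> - u + (\<gamma> + 1) * ln u)"

definition dsigma_loglik :: "real \<Rightarrow> real \<Rightarrow> real \<Rightarrow> real \<Rightarrow> real" where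
  "dsigma_loglik \<gamma> \<mu> \<sigma> x =
     (let z = z_gev \<mu> \<sigma> x; u = u_gev \<gamma> z in ((1 - u) * z - 1) / (\<sigma> * (1 + \<gamma> * z)))"

end

theory Submission
  imports Defs
begin

lemma core:
  fixes \<gamma> z u w :: real
  assumes w: "w = 1 + \<gamma> * z" "w > 0" and u: "u = u_gev \<gamma> z"
  shows "(z \<ge> 0 \<longrightarrow> \<bar>(1-u)*z - 1\<bar> \<le> z + 1)
       \<and> (z \<le> 0 \<longrightarrow> \<bar>(1-u)*z - 1\<bar> / w \<le> (1 + u * ln u) * u powr (max \<gamma> 0))"
proof (cases "\<gamma> = 0")
  case True
  then have uu: "u = exp (-z)" "w = 1" using u w by (auto simp: u_gev_def)
  have "z \<ge> 0 \<longrightarrow> u \<le> 1" using uu by simp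
  moreover have "z \<le> 0 \<longrightarrow> u \<ge> 1" using uu by simp
  moreover have "u > 0" using uu by simp
  ultimately show ?thesis
  proof (intro conjI impI)
    assume z0: "z \<ge> 0" and "z \<ge> 0 \<longrightarrow> u \<le> 1" "u > 0"
    then have "(1-u)*z \<le> z" "(1-u)*z \<ge> 0" by (auto simp: mult_left_le_one_le)
    then show "\<bar>(1-u)*z - 1\<bar> \<le> z + 1" using z0 by linarith
  next
    assume z0: "z \<le> 0" and "z \<le> 0 \<longrightarrow> u \<ge> 1" "u > 0"
    then have u1: "u \<ge> 1" by simp
    have "(1-u)*z \<ge> 0" using u1 z0 by (simp add: mult_nonpos_nonpos)
    moreover have "(1-u)*z \<le> u * (-z)" using z0 by (simp add: algebra_simps)
    moreover have "ln u = -z" using uu by simp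
    moreover have "u*(-z) \<ge> 0" using u1 z0 by (simp add: mult_nonneg_nonpos)
    ultimately show "\<bar>(1-u)*z - 1\<bar> / w \<le> (1 + u * ln u) * u powr (max \<gamma> 0)"
      using uu True \<open>u > 0\<close> by simp
  qed
next
  case False
  have uw: "u = w powr (-1/\<gamma>)" using u w False by (simp add: u_gev_def)
  have upos: "u > 0" using uw w by simp
  have lnu: "ln u = (-1/\<gamma>) * ln w" using uw w by (simp add: ln_powr)
  have zw: "z = (w - 1)/\<gamma>" using w False by (simp add: field_simps)
  show ?thesis
  proof (cases "\<gamma> > 0")
    case gp: True
    have P: "u powr (max \<gamma> 0) = 1 / w"
    proof -
      have "u powr (max \<gamma> 0) = (w powr (-1/\<gamma>)) powr \<gamma>" using gp uw by simp
      also have "\<dots> = w powr ((-1/\<gamma>) * \<gamma>)" by (rule powr_powr)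
      also have "\<dots> = w powr (-1)" using False by simp
      also have "\<dots> = 1 / w" using w by (simp add: powr_minus_divide)
      finally show ?thesis .
    qed
    have A: "z \<ge> 0 \<longrightarrow> u \<le> 1"
    proof
      assume "z \<ge> 0"
      then have "w \<ge> 1" using w gp by simp
      then show "u \<le> 1" using uw gp w powr_mono[of "-1/\<gamma>" 0 w] by simp
    qed
    have B: "z \<le> 0 \<longrightarrow> \<bar>(1-u)*z - 1\<bar> \<le> 1 + u * ln u"
    proof
      assume z0: "z \<le> 0"
      then have w1: "w \<le> 1" using w gp by (simp add: mult_nonneg_nonpos)
      then have u1: "u \<ge> 1" using uw gp w powr_mono'[of "-1/\<gamma>" 0 w] by simp
      have l: "ln w \<le> w - 1" using ln_le_minus_one[of w] w(2) by simp
      have lu: "ln u \<ge> 0" using u1 by simp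
      have "(1-u)*z = (u-1)*((1-w)/\<gamma>)" using zw by (simp add: field_simps)
      also have "\<dots> \<le> (u-1)*((-ln w)/\<gamma>)"
        using u1 l gp by (intro mult_left_mono divide_right_mono) auto
      also have "\<dots> = (u-1) * ln u" using lnu by simp
      also have "\<dots> \<le> u * ln u" using lu by (simp add: mult_right_mono)
      finally have h1: "(1-u)*z \<le> u * ln u" .
      have h2: "(1-u)*z \<ge> 0" using u1 z0 by (simp add: mult_nonpos_nonpos)
      show "\<bar>(1-u)*z - 1\<bar> \<le> 1 + u * ln u" using h1 h2 lu upos
        by (smt (verit) mult_nonneg_nonneg)
    qed
    show ?thesis
    proof (intro conjI impI)
      assume "z \<ge> 0"
      then have "u \<le> 1" "(1-u)*z \<le> z" "(1-u)*z \<ge> 0" using A upos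
        by (auto simp: mult_left_le_one_le)
      then show "\<bar>(1-u)*z - 1\<bar> \<le> z + 1" using \<open>z \<ge> 0\<close> by linarith
    next
      assume "z \<le> 0"
      then show "\<bar>(1-u)*z - 1\<bar> / w \<le> (1 + u * ln u) * u powr (max \<gamma> 0)"
        using B P w by (simp add: divide_right_mono)
    qed
  next
    case gn: False
    then have gneg: "\<gamma> < 0" using False by simp
    have P: "u powr (max \<gamma> 0) = 1" using gneg upos by simp
    show ?thesis
    proof (intro conjI impI)
      assume z0: "z \<ge> 0"
      then have "w \<le> 1" using w gneg by (simp add: mult_nonpos_nonneg)
      then have "u \<le> 1" using uw gneg w powr_mono'[of 0 "-1/\<gamma>" w] by simp
      then have "(1-u)*z \<le> z" "(1-u)*z \<ge> 0" using upos z0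
        by (auto simp: mult_left_le_one_le)
      then show "\<bar>(1-u)*z - 1\<bar> \<le> z + 1" using z0 by linarith
    next
      assume z0: "z \<le> 0"
      then have w1: "w \<ge> 1" using w gneg by (simp add: mult_nonpos_nonpos)
      then have u1: "u \<ge> 1" using uw gneg w powr_mono[of 0 "-1/\<gamma>" w] by simp
      have lu: "ln u \<ge> 0" using u1 by simp
      have l0: "ln (1/w) \<le> 1/w - 1" using ln_le_minus_one[of "1/w"] w(2) by simp
      have l: "1 - 1/w \<le> ln w" using l0 w(2) by (simp add: ln_div)
      have "(1-u)*z / w = (u-1)*((1-1/w)/(-\<gamma>))" unfolding zw using w(2) False by (simp add: field_simps)
      also have "\<dots> \<le> (u-1)*(ln w/(-\<gamma>))"
        using u1 l gneg by (intro mult_left_mono divide_right_mono) auto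
      also have "\<dots> = (u-1) * ln u" using lnu by simp
      also have "\<dots> \<le> u * ln u" using lu by (simp add: mult_right_mono)
      finally have h1: "(1-u)*z / w \<le> u * ln u" .
      have h2: "(1-u)*z / w \<ge> 0" using u1 z0 w by (simp add: mult_nonpos_nonpos)
      have h3: "1/w \<le> 1" "1/w > 0" using w1 by auto
      have "\<bar>(1-u)*z - 1\<bar> / w = \<bar>(1-u)*z/w - 1/w\<bar>" using w(2) by (simp add: diff_divide_distrib[symmetric] abs_divide)
      also have "\<dots> \<le> 1 + u * ln u" using h1 h2 h3 lu upos
        by (smt (verit) mult_nonneg_nonneg)
      finally show "\<bar>(1-u)*z - 1\<bar> / w \<le> (1 + u * ln u) * u powr (max \<gamma> 0)"
        using P by simp
    qed
  qed
qed

theorem lemmaB3: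
  fixes \<gamma> \<mu> \<sigma> x :: real
  assumes "\<sigma> > 0"
    and "1 + \<gamma> * z_gev \<mu> \<sigma> x > 0"
  shows "(z_gev \<mu> \<sigma> x \<ge> 0 \<longrightarrow>
            \<bar>dsigma_loglik \<gamma> \<mu> \<sigma> x\<bar>
              \<le> (z_gev \<mu> \<sigma> x + 1) / (\<sigma> * (1 + \<gamma> * z_gev \<mu> \<sigma> x)))
       \<and> (z_gev \<mu> \<sigma> x \<le> 0 \<longrightarrow>
            \<bar>dsigma_loglik \<gamma> \<mu> \<sigma> x\<bar>
              \<le> (1 / \<sigma>) * (1 + u_gev \<gamma> (z_gev \<mu> \<sigma> x) * ln (u_gev \<gamma> (z_gev \<mu> \<sigma> x)))
                 * u_gev \<gamma> (z_gev \<mu> \<sigma> x) powr (max \<gamma> 0))"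
proof -
  define z where "z = z_gev \<mu> \<sigma> x"
  define w where "w = 1 + \<gamma> * z"
  define u where "u = u_gev \<gamma> z"
  have wp: "w > 0" using assms(2) by (simp add: w_def z_def)
  have D: "dsigma_loglik \<gamma> \<mu> \<sigma> x = ((1-u)*z - 1)/(\<sigma>*w)"
    by (simp add: dsigma_loglik_def Let_def z_def u_def w_def)
  have C: "(z \<ge> 0 \<longrightarrow> \<bar>(1-u)*z - 1\<bar> \<le> z + 1)
       \<and> (z \<le> 0 \<longrightarrow> \<bar>(1-u)*z - 1\<bar> / w \<le> (1 + u * ln u) * u powr (max \<gamma> 0))"
    using core[OF w_def wp u_def] .
  have E: "\<bar>((1-u)*z - 1)/(\<sigma>*w)\<bar> = (\<bar>(1-u)*z - 1\<bar> / w) / \<sigma>"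
    using wp assms(1) by (simp add: abs_divide abs_mult)
  show ?thesis
    unfolding D z_def[symmetric] u_def[symmetric] w_def[symmetric]
  proof (intro conjI impI)
    assume "z \<ge> 0"
    then show "\<bar>((1-u)*z - 1)/(\<sigma>*w)\<bar> \<le> (z + 1) / (\<sigma> * w)"
      using C wp assms(1) by (simp add: abs_divide abs_mult divide_right_mono)
  next
    assume "z \<le> 0"
    then have "\<bar>(1-u)*z - 1\<bar> / w \<le> (1 + u * ln u) * u powr (max \<gamma> 0)" using C by simp
    then have "(\<bar>(1-u)*z - 1\<bar> / w) / \<sigma> \<le> ((1 + u * ln u) * u powr (max \<gamma> 0)) / \<sigma>"
      by (rule divide_right_mono) (use assms(1) in auto)
    moreover have "1 / \<sigma> * (1 + u * ln u) * u powr max \<gamma> 0 = ((1 + u * ln u) * u powr (max \<gamma> 0)) / \<sigma>"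
      by simp
    ultimately show "\<bar>((1-u)*z - 1)/(\<sigma>*w)\<bar> \<le> 1 / \<sigma> * (1 + u * ln u) * u powr max \<gamma> 0"
      using E by linarith
  qed
qed

end
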